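(* Let $N\ge 3$ be odd, $p<0$, and let $0\le r_1<r_2<\dots<r_N\le 1$ be distinct points. Define $\sigma\in S_N$ by $\sigma(1)=1$, $\sigma(i)=\frac{N-i+3}{2}$ for even $i>1$, and $\sigma(i)=\frac{2N-i+3}{2}$ for odd $i>1$. Then $h^*=h[\sigma]$ is an optimal Hamiltonian cycle: $E(h^* )\le E(h)$ for every Hamiltonian cycle $h$. (In $h^*$ each vertex $r_a$ is adjacent to $r_{a+(N-1)/2}$ and $r_{a+(N+1)/2}$, indices taken mod $N$ in $\{1,\dots,N\}$.)
   Context: The points are the vertices of the complete graph $\mathcal K_N$. For $p\in\mathbb R$ the weight of the edge $\{r_i,r_j\}$ is $w_{ij}=|r_i-r_j|^p$, and the cost of a Hamiltonian cycle $h$ is $E(h)=\sum_{e\in h}w_e$. For $\sigma\in S_N$, $h[\sigma]$ denotes the Hamiltonian cycle with edges $\{r_{\sigma(i)},r_{\sigma(i+1)}\}$, $i=1,\dots,N$, with $\sigma(N+1):=\sigma(1)$. *)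

theory Defs
  imports "HOL-Analysis.Analysis" "HOL-Combinatorics.Permutations"
begin

(* Points r_1,...,r_N are given as r :: nat => real, used on indices 1..N.
   Edge weight w_ij = |r_i - r_j|^p (real exponent p). *)
definition edge_weight :: "real \<Rightarrow> (nat \<Rightarrow> real) \<Rightarrow> nat \<Rightarrow> nat \<Rightarrow> real" where
  "edge_weight p r i j = \<bar>r i - r j\<bar> powr p"

definition cycle_cost :: "nat \<Rightarrow> real \<Rightarrow> (nat \<Rightarrow> real) \<Rightarrow> (nat \<Rightarrow> nat) \<Rightarrow> real" where
  "cycle_cost N p r \<sigma> =
     (\<Sum>i = 1..N. edge_weight p r (\<sigma> i) (\<sigma> (if i = N then 1 else i + 1)))"

(* The permutation sigma from the statement (on {1..N}; identity elsewhere,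
   as required by Isabelle's 'permutes'). *)
definition sigma_star :: "nat \<Rightarrow> nat \<Rightarrow> nat" where
  "sigma_star N i = (if i < 1 \<or> N < i then i
                     else if i = 1 then 1
                     else if even i then (N - i + 3) div 2
                     else (2 * N - i + 3) div 2)"

end

theory Submission
  imports Defs
begin

lemma powr_convex_neg:
  assumes "p \<le> 0" shows "convex_on {0<..} (\<lambda>x::real. x powr p)"
proof (rule f''_ge0_imp_convex[where f'="\<lambda>x. p * x powr (p-1)" and f''="\<lambda>x. p * ((p-1) * x powr (p-1-1))"])
  show "convex {0::real<..}" by simp
  show "DERIV (\<lambda>x. x powr p) x :> p * x powr (p-1)" if "x \<in> {0<..}" for x
    using has_real_derivative_powr[of x p] that by simp
  show "DERIV (\<lambda>x. p * x powr (p-1)) x :> p * ((p-1) * x powr (p-1-1))" if "x \<in> {0<..}" for x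
    using has_real_derivative_powr[of x "p-1"] that by (intro DERIV_cmult) simp
  show "0 \<le> p * ((p-1) * x powr (p-1-1))" if "x \<in> {0<..}" for x
    using assms by (intro mult_nonpos_nonpos) (auto intro: mult_nonpos_nonneg)
qed

lemma four_point:
  fixes p x a b :: real
  assumes "p < 0" "x > 0" "a > 0" "b > 0"
  shows "(x+a) powr p + (x+b) powr p \<le> x powr p + (x+a+b) powr p"
proof -
  let ?f = "\<lambda>x::real. x powr p"
  have cv: "convex_on {x..x+a+b} ?f"
    using powr_convex_neg[of p] assms
    by (rule_tac convex_on_subset[of "{0<..}"]) auto
  have 1: "?f (x+a) \<le> (?f (x+a+b) - ?f x) / (x+a+b-x) * (x+a - x) + ?f x"
    using convex_onD_Icc'[OF cv, of "x+a"] assms by simp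
  have 2: "?f (x+b) \<le> (?f (x+a+b) - ?f x) / (x+a+b-x) * (x+b - x) + ?f x"
    using convex_onD_Icc'[OF cv, of "x+b"] assms by simp
  have "(?f (x+a+b) - ?f x) / (x+a+b-x) * (x+a - x) + (?f (x+a+b) - ?f x) / (x+a+b-x) * (x+b - x)
     = ?f (x+a+b) - ?f x"
  proof -
    define D where "D = (?f (x+a+b) - ?f x) / (a+b)"
    have "(?f (x+a+b) - ?f x) / (x+a+b-x) * (x+a - x) + (?f (x+a+b) - ?f x) / (x+a+b-x) * (x+b - x)
      = D * a + D * b" by (simp add: D_def add.assoc)
    also have "\<dots> = D * (a+b)" by (simp add: algebra_simps)
    also have "\<dots> = ?f (x+a+b) - ?f x" using assms by (simp add: D_def)
    finally show ?thesis .
  qed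
  with 1 2 show ?thesis by linarith
qed

definition nxt :: "nat \<Rightarrow> nat \<Rightarrow> nat" where
  "nxt N i = (if i = N then 1 else i + 1)"

definition FF :: "nat \<Rightarrow> real \<Rightarrow> (nat \<Rightarrow> real) \<Rightarrow> nat \<Rightarrow> nat \<Rightarrow> real" where
  "FF N p r a b = (if 1 \<le> a \<and> a < b \<and> b \<le> N then (r b - r a) powr p else 0)"

definition mu :: "nat \<Rightarrow> real \<Rightarrow> (nat \<Rightarrow> real) \<Rightarrow> nat \<Rightarrow> nat \<Rightarrow> real" where
  "mu N p r a b = FF N p r a b - FF N p r (a-1) b - FF N p r a (b+1) + FF N p r (a-1) (b+1)"

definition cnt :: "nat \<Rightarrow> (nat \<Rightarrow> nat) \<Rightarrow> nat \<Rightarrow> nat \<Rightarrow> nat" where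
  "cnt N g a b = card {i\<in>{1..N}. g i \<in> {a..b} \<and> g (nxt N i) \<in> {a..b}}"

lemma tel_down:
  fixes g :: "nat \<Rightarrow> real"
  assumes "v \<le> Suc n"
  shows "(\<Sum>b=v..n. g b - g (Suc b)) = g v - g (Suc n)"
  using sum_Suc_diff[OF assms, of g] by (simp add: sum_subtractf)

lemma tel_up:
  fixes h :: "nat \<Rightarrow> real"
  shows "(\<Sum>a=1..u. h a - h (a-1)) = h u - h 0"
  by (induction u) (auto simp: sum.cl_ivl_Suc)

lemma decomp:
  assumes "1 \<le> u" "u < v" "v \<le> N"
  shows "FF N p r u v = (\<Sum>a=1..u. \<Sum>b=v..N. mu N p r a b)"
proof -
  have inner: "(\<Sum>b=v..N. mu N p r a b) = FF N p r a v - FF N p r (a-1) v" for a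
  proof -
    let ?g = "\<lambda>b. FF N p r a b - FF N p r (a-1) b"
    have "(\<Sum>b=v..N. mu N p r a b) = (\<Sum>b=v..N. ?g b - ?g (Suc b))"
      by (simp add: mu_def algebra_simps)
    also have "\<dots> = ?g v - ?g (Suc N)" using tel_down[of v N ?g] assms by simp
    also have "?g (Suc N) = 0" by (simp add: FF_def)
    finally show ?thesis by simp
  qed
  have "(\<Sum>a=1..u. \<Sum>b=v..N. mu N p r a b) = (\<Sum>a=1..u. FF N p r a v - FF N p r (a-1) v)"
    using inner by simp
  also have "\<dots> = FF N p r u v - FF N p r 0 v" using tel_up[of "\<lambda>a. FF N p r a v" u] by simp
  also have "FF N p r 0 v = 0" by (simp add: FF_def)
  finally show ?thesis by simp
qed

lemma mu_nonneg:
  assumes p: "p < 0" and mono: "\<And>i j. 1 \<le> i \<Longrightarrow> i < j \<Longrightarrow> j \<le> N \<Longrightarrow> r i < r j"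
    and ab: "1 \<le> a" "a < b" "b \<le> N"
  shows "0 \<le> mu N p r a b"
proof (cases "a = 1")
  case True
  show ?thesis
  proof (cases "b = N")
    case True
    with \<open>a = 1\<close> ab show ?thesis by (simp add: mu_def FF_def)
  next
    case False
    have "(r (b+1) - r 1) powr p \<le> (r b - r 1) powr p"
      using ab mono[of 1 b] mono[of b "b+1"] False p
      by (intro powr_mono2') auto
    with \<open>a = 1\<close> False ab show ?thesis by (simp add: mu_def FF_def)
  qed
next
  case False
  show ?thesis
  proof (cases "b = N")
    case True
    have "(r b - r (a-1)) powr p \<le> (r b - r a) powr p"
    proof -
      have a2: "1 \<le> a - 1" using ab False by arith
      show ?thesis using ab mono[of a b] mono[of "a-1" a] a2 p
        by (intro powr_mono2') auto
    qed
    with \<open>b = N\<close> False ab show ?thesis by (simp add: mu_def FF_def)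
  next
    case False2: False
    define x where "x = r b - r a"
    define \<alpha> where "\<alpha> = r a - r (a-1)"
    define \<beta> where "\<beta> = r (b+1) - r b"
    have x: "x > 0" using mono[of a b] ab by (simp add: x_def)
    have a2: "1 \<le> a - 1" using ab False by arith
    have al: "\<alpha> > 0" using mono[of "a-1" a] ab a2 by (simp add: \<alpha>_def)
    have be: "\<beta> > 0" using mono[of b "b+1"] ab False2 by (simp add: \<beta>_def)
    have "(x+\<alpha>) powr p + (x+\<beta>) powr p \<le> x powr p + (x+\<alpha>+\<beta>) powr p"
      using four_point[OF p x al be] .
    moreover have eqs: "r b - r (a-1) = x + \<alpha>" "r (b+1) - r a = x + \<beta>" "r (b+1) - r (a-1) = x+\<alpha>+\<beta>"
      "r b - r a = x"
      by (simp_all add: x_def \<alpha>_def \<beta>_def)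
    ultimately have ineq: "(r b - r (a-1)) powr p + (r (b+1) - r a) powr p \<le> (r b - r a) powr p + (r (b+1) - r (a-1)) powr p"
      by (simp only: eqs)
    have "mu N p r a b = (r b - r a) powr p - (r b - r (a-1)) powr p - (r (b+1) - r a) powr p + (r (b+1) - r (a-1)) powr p"
    proof -
      have "a - 1 < b" "a - 1 < b + 1" "b + 1 \<le> N" using ab False2 by auto
      then show ?thesis using ab a2 by (simp add: mu_def FF_def)
    qed
    with ineq show ?thesis by linarith
  qed
qed

lemma edge_sum:
  assumes mono: "\<And>i j. 1 \<le> i \<Longrightarrow> i < j \<Longrightarrow> j \<le> N \<Longrightarrow> r i < r j"
    and uv: "u \<in> {1..N}" "v \<in> {1..N}" "u \<noteq> v"
  shows "edge_weight p r u v = (\<Sum>a\<in>{1..N}. \<Sum>b\<in>{1..N}. if u \<in> {a..b} \<and> v \<in> {a..b} then mu N p r a b else 0)"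
proof -
  define lo where "lo = min u v"
  define hi where "hi = max u v"
  have lohi: "1 \<le> lo" "lo < hi" "hi \<le> N" using uv by (auto simp: lo_def hi_def)
  have ew: "edge_weight p r u v = FF N p r lo hi"
  proof (cases "u < v")
    case True
    then have "r u < r v" using mono[of u v] uv by auto
    then show ?thesis using True lohi by (simp add: edge_weight_def FF_def lo_def hi_def)
  next
    case False
    then have "v < u" using uv by simp
    then have "r v < r u" using mono[of v u] uv by auto
    then show ?thesis using \<open>v < u\<close> lohi by (simp add: edge_weight_def FF_def lo_def hi_def)
  qed
  have cond: "(u \<in> {a..b} \<and> v \<in> {a..b}) = (a \<le> lo \<and> hi \<le> b)" for a b
    by (auto simp: lo_def hi_def)
  have inner: "(\<Sum>b\<in>{1..N}. if a \<le> lo \<and> hi \<le> b then mu N p r a b else 0)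
      = (if a \<le> lo then (\<Sum>b\<in>{hi..N}. mu N p r a b) else 0)" for a
  proof (cases "a \<le> lo")
    case True
    have "(\<Sum>b\<in>{1..N}. if a \<le> lo \<and> hi \<le> b then mu N p r a b else 0)
        = (\<Sum>b\<in>{1..N}. if hi \<le> b then mu N p r a b else 0)" using True by simp
    also have "\<dots> = sum (mu N p r a) {b\<in>{1..N}. hi \<le> b}" by (subst sum.inter_filter) auto
    also have "{b\<in>{1..N}. hi \<le> b} = {hi..N}" using lohi by auto
    finally show ?thesis using True by simp
  qed simp
  have "(\<Sum>a\<in>{1..N}. \<Sum>b\<in>{1..N}. if u \<in> {a..b} \<and> v \<in> {a..b} then mu N p r a b else 0)
      = (\<Sum>a\<in>{1..N}. if a \<le> lo then (\<Sum>b\<in>{hi..N}. mu N p r a b) else 0)"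
    by (simp only: cond inner)
  also have "\<dots> = (\<Sum>a\<in>{a\<in>{1..N}. a \<le> lo}. \<Sum>b\<in>{hi..N}. mu N p r a b)" by (subst sum.inter_filter) auto
  also have "{a\<in>{1..N}. a \<le> lo} = {1..lo}" using lohi by auto
  also have "(\<Sum>a\<in>{1..lo}. \<Sum>b\<in>{hi..N}. mu N p r a b) = FF N p r lo hi"
    using decomp[OF lohi] by simp
  finally show ?thesis using ew by simp
qed

lemma cost_sum:
  assumes mono: "\<And>i j. 1 \<le> i \<Longrightarrow> i < j \<Longrightarrow> j \<le> N \<Longrightarrow> r i < r j"
    and into: "\<And>i. i \<in> {1..N} \<Longrightarrow> g i \<in> {1..N}"
    and ne: "\<And>i. i \<in> {1..N} \<Longrightarrow> g i \<noteq> g (nxt N i)"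
  shows "cycle_cost N p r g = (\<Sum>a\<in>{1..N}. \<Sum>b\<in>{1..N}. mu N p r a b * real (cnt N g a b))"
proof -
  have nx: "i \<in> {1..N} \<Longrightarrow> nxt N i \<in> {1..N}" for i by (auto simp: nxt_def)
  have "cycle_cost N p r g = (\<Sum>i\<in>{1..N}. edge_weight p r (g i) (g (nxt N i)))"
    by (simp add: cycle_cost_def nxt_def)
  also have "\<dots> = (\<Sum>i\<in>{1..N}. \<Sum>a\<in>{1..N}. \<Sum>b\<in>{1..N}.
      if g i \<in> {a..b} \<and> g (nxt N i) \<in> {a..b} then mu N p r a b else 0)"
    by (rule sum.cong[OF refl], rule edge_sum[OF mono into into[OF nx] ne])
  also have "\<dots> = (\<Sum>a\<in>{1..N}. \<Sum>i\<in>{1..N}. \<Sum>b\<in>{1..N}.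
      if g i \<in> {a..b} \<and> g (nxt N i) \<in> {a..b} then mu N p r a b else 0)"
    by (rule sum.swap)
  also have "\<dots> = (\<Sum>a\<in>{1..N}. \<Sum>b\<in>{1..N}. \<Sum>i\<in>{1..N}.
      if g i \<in> {a..b} \<and> g (nxt N i) \<in> {a..b} then mu N p r a b else 0)"
    by (rule sum.cong[OF refl], rule sum.swap)
  also have "\<dots> = (\<Sum>a\<in>{1..N}. \<Sum>b\<in>{1..N}. mu N p r a b * real (cnt N g a b))"
  proof (intro sum.cong refl)
    fix a b
    have "(\<Sum>i\<in>{1..N}. if g i \<in> {a..b} \<and> g (nxt N i) \<in> {a..b} then mu N p r a b else 0)
       = (\<Sum>i\<in>{i\<in>{1..N}. g i \<in> {a..b} \<and> g (nxt N i) \<in> {a..b}}. mu N p r a b)"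
      by (subst sum.inter_filter) auto
    also have "\<dots> = mu N p r a b * real (cnt N g a b)" by (simp add: cnt_def)
    finally show "(\<Sum>i\<in>{1..N}. if g i \<in> {a..b} \<and> g (nxt N i) \<in> {a..b} then mu N p r a b else 0)
       = mu N p r a b * real (cnt N g a b)" .
  qed
  finally show ?thesis .
qed

lemma cnt_zero:
  assumes "b \<le> a" and ne: "\<And>i. i \<in> {1..N} \<Longrightarrow> g i \<noteq> g (nxt N i)"
  shows "cnt N g a b = 0"
proof -
  have "{i\<in>{1..N}. g i \<in> {a..b} \<and> g (nxt N i) \<in> {a..b}} = {}"
    using assms(1) ne by fastforce
  then show ?thesis by (simp add: cnt_def)
qed

lemma card_pre:
  assumes "bij_betw g S S" "finite S" "I \<subseteq> S"
  shows "card {i\<in>S. g i \<in> I} = card I"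
proof -
  have inj: "inj_on g {i\<in>S. g i \<in> I}"
    using assms(1) by (auto simp: bij_betw_def intro: inj_on_subset)
  have "g ` {i\<in>S. g i \<in> I} = I"
  proof
    show "g ` {i \<in> S. g i \<in> I} \<subseteq> I" by auto
    show "I \<subseteq> g ` {i \<in> S. g i \<in> I}"
    proof
      fix y assume y: "y \<in> I"
      then have "y \<in> g ` S" using assms(1,3) by (auto simp: bij_betw_def)
      then obtain x where "x \<in> S" "y = g x" by auto
      then show "y \<in> g ` {i \<in> S. g i \<in> I}" using y by auto
    qed
  qed
  with card_image[OF inj] show ?thesis by simp
qed

lemma nxt_bij:
  assumes "1 \<le> N"
  shows "bij_betw (nxt N) {1..N} {1..N}"
proof (rule bij_betw_imageI)
  show "inj_on (nxt N) {1..N}"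
    by (auto simp: inj_on_def nxt_def split: if_splits)
  show "nxt N ` {1..N} = {1..N}"
  proof
    show "nxt N ` {1..N} \<subseteq> {1..N}" using assms by (auto simp: nxt_def)
    show "{1..N} \<subseteq> nxt N ` {1..N}"
    proof
      fix y assume y: "y \<in> {1..N}"
      show "y \<in> nxt N ` {1..N}"
      proof (cases "y = 1")
        case True
        then show ?thesis using assms by (intro image_eqI[of _ _ N]) (auto simp: nxt_def)
      next
        case False
        then show ?thesis using y by (intro image_eqI[of _ _ "y-1"]) (auto simp: nxt_def)
      qed
    qed
  qed
qed

lemma cnt_lower:
  assumes bij: "bij_betw g {1..N} {1..N}" and ab: "1 \<le> a" "a \<le> b" "b \<le> N"
  shows "2 * (b + 1 - a) \<le> cnt N g a b + N"
proof -
  define A where "A = {i\<in>{1..N}. g i \<in> {a..b}}"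
  define B where "B = {i\<in>{1..N}. (g \<circ> nxt N) i \<in> {a..b}}"
  have N1: "1 \<le> N" using ab by simp
  have cA: "card A = b + 1 - a" using card_pre[OF bij, of "{a..b}"] ab by (simp add: A_def)
  have bij2: "bij_betw (g \<circ> nxt N) {1..N} {1..N}" using bij_betw_trans[OF nxt_bij[OF N1] bij] .
  have cB: "card B = b + 1 - a" using card_pre[OF bij2, of "{a..b}"] ab by (simp add: B_def)
  have "A \<union> B \<subseteq> {1..N}" by (auto simp: A_def B_def)
  then have "card (A \<union> B) \<le> card {1..N}" by (intro card_mono) auto
  then have "card (A \<union> B) \<le> N" by simp
  moreover have "card A + card B = card (A \<union> B) + card (A \<inter> B)"
    by (rule card_Un_Int) (auto simp: A_def B_def)
  moreover have "A \<inter> B = {i\<in>{1..N}. g i \<in> {a..b} \<and> g (nxt N i) \<in> {a..b}}"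
    by (auto simp: A_def B_def)
  ultimately show ?thesis using cA cB by (simp add: cnt_def)
qed

lemma sig_one: "1 \<le> N \<Longrightarrow> sigma_star N 1 = 1"
  by (simp add: sigma_star_def)

lemma sig_even:
  fixes N m k :: nat
  assumes "N = 2*m+1" "1 \<le> k" "k \<le> m"
  shows "sigma_star N (2*k) = m+2-k"
proof -
  have "(N - 2*k + 3) div 2 = m+2-k" using assms by presburger
  then show ?thesis using assms by (simp add: sigma_star_def)
qed

lemma sig_odd:
  fixes N m k :: nat
  assumes "N = 2*m+1" "1 \<le> k" "k \<le> m"
  shows "sigma_star N (2*k+1) = 2*m+2-k"
proof -
  have "(2*N - (2*k+1) + 3) div 2 = 2*m+2-k" using assms by presburger
  then show ?thesis using assms by (simp add: sigma_star_def)
qed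

lemma nat_cases3:
  fixes N m i :: nat
  assumes "N = 2*m+1" "1 \<le> i" "i \<le> N"
  shows "i = 1 \<or> (\<exists>k. i = 2*k \<and> 1 \<le> k \<and> k \<le> m) \<or> (\<exists>k. i = 2*k+1 \<and> 1 \<le> k \<and> k \<le> m)"
  using assms by presburger

lemma sig_cases:
  assumes "N = 2*m+1" "1 \<le> i" "i \<le> N"
  shows "(i = 1 \<and> sigma_star N i = 1) \<or> (\<exists>k. i = 2*k \<and> 1 \<le> k \<and> k \<le> m \<and> sigma_star N i = m+2-k)
     \<or> (\<exists>k. i = 2*k+1 \<and> 1 \<le> k \<and> k \<le> m \<and> sigma_star N i = 2*m+2-k)"
  using nat_cases3[OF assms] sig_one[of N] sig_even[OF assms(1)] sig_odd[OF assms(1)] assms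
  by auto

lemma sig_permutes:
  assumes "N = 2*m+1" "1 \<le> m"
  shows "sigma_star N permutes {1..N}"
proof (rule bij_imp_permutes)
  show "sigma_star N x = x" if "x \<notin> {1..N}" for x
    using that by (auto simp: sigma_star_def)
  show "bij_betw (sigma_star N) {1..N} {1..N}"
  proof (rule bij_betw_imageI)
    show "inj_on (sigma_star N) {1..N}"
    proof (rule inj_onI)
      fix i j assume i: "i \<in> {1..N}" and j: "j \<in> {1..N}" and eq: "sigma_star N i = sigma_star N j"
      from sig_cases[OF assms(1), of i] sig_cases[OF assms(1), of j] i j eq
      show "i = j" by auto
    qed
    show "sigma_star N ` {1..N} = {1..N}"
    proof
      show "sigma_star N ` {1..N} \<subseteq> {1..N}"
      proof
        fix y assume "y \<in> sigma_star N ` {1..N}"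
        then obtain i where i: "i \<in> {1..N}" "y = sigma_star N i" by auto
        from sig_cases[OF assms(1), of i] i assms show "y \<in> {1..N}" by auto
      qed
      show "{1..N} \<subseteq> sigma_star N ` {1..N}"
      proof
        fix y assume y: "y \<in> {1..N}"
        consider "y = 1" | "2 \<le> y \<and> y \<le> m+1" | "m+2 \<le> y \<and> y \<le> N" using y by fastforce
        then show "y \<in> sigma_star N ` {1..N}"
        proof cases
          case 1 then show ?thesis using sig_one[of N] assms by (intro image_eqI[of _ _ 1]) auto
        next
          case 2
          then have "sigma_star N (2*(m+2-y)) = y" using sig_even[OF assms(1), of "m+2-y"] by auto
          then show ?thesis using 2 assms by (intro image_eqI[of _ _ "2*(m+2-y)"]) auto
        next
          case 3
          then have "sigma_star N (2*(2*m+2-y)+1) = y" using sig_odd[OF assms(1), of "2*m+2-y"] assms by auto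
          then show ?thesis using 3 assms by (intro image_eqI[of _ _ "2*(2*m+2-y)+1"]) auto
        qed
      qed
    qed
  qed
qed

definition g1 :: "nat \<Rightarrow> nat \<Rightarrow> nat" where "g1 m x = (if x = 1 then 1 else 2*(m+2-x))"
definition g2 :: "nat \<Rightarrow> nat \<Rightarrow> nat" where "g2 m x = (if x = 1 then 2*m+1 else 2*(m+2-x)-1)"

lemma sig_edge:
  assumes N: "N = 2*m+1" "1 \<le> m" and i: "1 \<le> i" "i \<le> N"
  shows "\<exists>x\<ge>1. (i = g1 m x \<and> ((sigma_star N i = x \<and> sigma_star N (nxt N i) = x+m) \<or>
                                (sigma_star N i = x+m \<and> sigma_star N (nxt N i) = x)))
           \<or> (i = g2 m x \<and> ((sigma_star N i = x \<and> sigma_star N (nxt N i) = x+m+1) \<or>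
                                (sigma_star N i = x+m+1 \<and> sigma_star N (nxt N i) = x)))"
proof -
  consider "i = 1" | k where "i = 2*k" "1 \<le> k" "k \<le> m" | k where "i = 2*k+1" "1 \<le> k" "k < m"
    | "i = 2*m+1"
    using nat_cases3[OF N(1) i] by (metis le_neq_implies_less)
  then show ?thesis
  proof cases
    case 1
    have "nxt N i = 2*1" using 1 N by (simp add: nxt_def)
    moreover have "sigma_star N (2*1) = m+1" using sig_even[OF N(1), of 1] N by simp
    ultimately show ?thesis using 1 sig_one[of N] N
      by (intro exI[of _ 1]) (simp add: g1_def)
  next
    case 2
    have "nxt N i = 2*k+1" using 2 N by (simp add: nxt_def)
    then have "sigma_star N (nxt N i) = 2*m+2-k" using sig_odd[OF N(1), of k] 2 by simp
    moreover have "sigma_star N i = m+2-k" using sig_even[OF N(1), of k] 2 by simp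
    moreover have "g1 m (m+2-k) = i" using 2 by (simp add: g1_def)
    ultimately show ?thesis using 2 by (intro exI[of _ "m+2-k"]) auto
  next
    case 3
    have "nxt N i = 2*(k+1)" using 3 N by (simp add: nxt_def)
    then have "sigma_star N (nxt N i) = m+1-k" using sig_even[OF N(1), of "k+1"] 3 by simp
    moreover have "sigma_star N i = 2*m+2-k" using sig_odd[OF N(1), of k] 3 by simp
    moreover have "g2 m (m+1-k) = i" using 3 by (simp add: g2_def)
    ultimately show ?thesis using 3 by (intro exI[of _ "m+1-k"]) auto
  next
    case 4
    have "nxt N i = 1" using 4 N by (simp add: nxt_def)
    then have "sigma_star N (nxt N i) = 1" using sig_one[of N] N by simp
    moreover have "sigma_star N i = m+2" using sig_odd[OF N(1), of m] 4 N by simp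
    moreover have "g2 m 1 = i" using 4 by (simp add: g2_def)
    ultimately show ?thesis using 4 by (intro exI[of _ 1]) auto
  qed
qed

lemma sig_ne:
  assumes N: "N = 2*m+1" "1 \<le> m" and i: "i \<in> {1..N}"
  shows "sigma_star N i \<noteq> sigma_star N (nxt N i)"
  using sig_edge[OF N, of i] i N by auto

lemma cnt_sig:
  assumes N: "N = 2*m+1" "1 \<le> m"
  shows "cnt N (sigma_star N) a b \<le> (b+1-m-a) + (b-m-a)"
proof -
  let ?S = "{i\<in>{1..N}. sigma_star N i \<in> {a..b} \<and> sigma_star N (nxt N i) \<in> {a..b}}"
  have sub: "?S \<subseteq> g1 m ` {a..<b+1-m} \<union> g2 m ` {a..<b-m}"
  proof
    fix i assume "i \<in> ?S"
    then have i: "1 \<le> i" "i \<le> N" and ab: "sigma_star N i \<in> {a..b}" "sigma_star N (nxt N i) \<in> {a..b}"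
      by auto
    obtain x where x: "x \<ge> 1" and
      "(i = g1 m x \<and> ((sigma_star N i = x \<and> sigma_star N (nxt N i) = x+m) \<or>
                                (sigma_star N i = x+m \<and> sigma_star N (nxt N i) = x)))
           \<or> (i = g2 m x \<and> ((sigma_star N i = x \<and> sigma_star N (nxt N i) = x+m+1) \<or>
                                (sigma_star N i = x+m+1 \<and> sigma_star N (nxt N i) = x)))"
      using sig_edge[OF N i] by blast
    then consider "i = g1 m x" "a \<le> x" "x + m \<le> b" | "i = g2 m x" "a \<le> x" "x + m + 1 \<le> b"
      using ab by fastforce
    then show "i \<in> g1 m ` {a..<b+1-m} \<union> g2 m ` {a..<b-m}"
    proof cases
      case 1 then show ?thesis by auto
    next
      case 2 then show ?thesis by auto
    qed
  qed
  have "cnt N (sigma_star N) a b = card ?S" by (simp add: cnt_def)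
  also have "\<dots> \<le> card (g1 m ` {a..<b+1-m} \<union> g2 m ` {a..<b-m})"
    by (rule card_mono[OF _ sub]) auto
  also have "\<dots> \<le> card (g1 m ` {a..<b+1-m}) + card (g2 m ` {a..<b-m})" by (rule card_Un_le)
  also have "\<dots> \<le> card {a..<b+1-m} + card {a..<b-m}" by (intro add_mono card_image_le) auto
  finally show ?thesis by simp
qed

theorem proposition3:
  fixes N :: nat and p :: real and r :: "nat \<Rightarrow> real"
  assumes "N \<ge> 3" and "odd N" and "p < 0"
    and "\<And>i. 1 \<le> i \<Longrightarrow> i \<le> N \<Longrightarrow> 0 \<le> r i \<and> r i \<le> 1"
    and "\<And>i j. 1 \<le> i \<Longrightarrow> i < j \<Longrightarrow> j \<le> N \<Longrightarrow> r i < r j"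
  shows "sigma_star N permutes {1..N}
    \<and> (\<forall>\<tau>. \<tau> permutes {1..N} \<longrightarrow> cycle_cost N p r (sigma_star N) \<le> cycle_cost N p r \<tau>)"
proof -
  define m where "m = N div 2"
  have N: "N = 2*m+1" "1 \<le> m" using assms(1,2) unfolding m_def by presburger+
  have mono: "\<And>i j. 1 \<le> i \<Longrightarrow> i < j \<Longrightarrow> j \<le> N \<Longrightarrow> r i < r j" by (rule assms(5))
  have perm: "sigma_star N permutes {1..N}" by (rule sig_permutes[OF N])
  have nxt_in: "i \<in> {1..N} \<Longrightarrow> nxt N i \<in> {1..N}" for i by (auto simp: nxt_def)
  have nxt_ne: "i \<in> {1..N} \<Longrightarrow> nxt N i \<noteq> i" for i using N by (auto simp: nxt_def)
  have sbij: "bij_betw (sigma_star N) {1..N} {1..N}" by (rule permutes_imp_bij[OF perm])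
  have sin: "i \<in> {1..N} \<Longrightarrow> sigma_star N i \<in> {1..N}" for i using sbij by (auto simp: bij_betw_def)
  have sne: "i \<in> {1..N} \<Longrightarrow> sigma_star N i \<noteq> sigma_star N (nxt N i)" for i by (rule sig_ne[OF N])
  have "\<forall>\<tau>. \<tau> permutes {1..N} \<longrightarrow> cycle_cost N p r (sigma_star N) \<le> cycle_cost N p r \<tau>"
  proof (intro allI impI)
    fix \<tau> assume tau: "\<tau> permutes {1..N}"
    have bij: "bij_betw \<tau> {1..N} {1..N}" by (rule permutes_imp_bij[OF tau])
    have tin: "i \<in> {1..N} \<Longrightarrow> \<tau> i \<in> {1..N}" for i using bij by (auto simp: bij_betw_def)
    have tne: "\<tau> i \<noteq> \<tau> (nxt N i)" if i: "i \<in> {1..N}" for i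
    proof
      assume "\<tau> i = \<tau> (nxt N i)"
      then have "i = nxt N i" using bij i nxt_in[OF i] by (auto simp: bij_betw_def dest: inj_onD)
      then show False using nxt_ne[OF i] by simp
    qed
    have "cycle_cost N p r (sigma_star N) = (\<Sum>a\<in>{1..N}. \<Sum>b\<in>{1..N}. mu N p r a b * real (cnt N (sigma_star N) a b))"
      by (rule cost_sum[where N=N and r=r and g="sigma_star N", OF mono sin sne])
    also have "\<dots> \<le> (\<Sum>a\<in>{1..N}. \<Sum>b\<in>{1..N}. mu N p r a b * real (cnt N \<tau> a b))"
    proof (intro sum_mono)
      fix a b assume a: "a \<in> {1..N}" and b: "b \<in> {1..N}"
      show "mu N p r a b * real (cnt N (sigma_star N) a b) \<le> mu N p r a b * real (cnt N \<tau> a b)"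
      proof (cases "b \<le> a")
        case True
        then show ?thesis using cnt_zero[of b a N "sigma_star N"] cnt_zero[of b a N \<tau>] sne tne by simp
      next
        case False
        have "0 \<le> mu N p r a b" using mu_nonneg[OF assms(3) mono] a b False by auto
        moreover have "cnt N (sigma_star N) a b \<le> cnt N \<tau> a b"
          using cnt_sig[OF N, of a b] cnt_lower[OF bij, of a b] a b False N by auto
        ultimately show ?thesis by (intro mult_left_mono) auto
      qed
    qed
    also have "\<dots> = cycle_cost N p r \<tau>"
      by (rule cost_sum[where N=N and r=r and g=\<tau>, OF mono tin tne, symmetric])
    finally show "cycle_cost N p r (sigma_star N) \<le> cycle_cost N p r \<tau>" .
  qed
  with perm show ?thesis by blast
qed

end
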